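(* For nonnegative integers $i$ and $k$, $$\binom{i+k}{2k}_q=\binom{i}{k}_q+\sum_{r=1}^kq^{k+r}\binom{i+r-1}{k+r}_q.$$
   Context: For nonnegative integers $n$, $[n]!_q=\prod_{j=1}^n\frac{1-q^j}{1-q}$ (with $[0]!_q=1$), and for integers $0\le k\le n$, $\binom{n}{k}_q=\frac{[n]!_q}{[k]!_q[n-k]!_q}$ (Gaussian polynomial); set $\binom{n}{k}_q=0$ if $k<0$ or $k>n$. *)

theory Defs
  imports "HOL-Computational_Algebra.Polynomial"
begin

text \<open>q-integers, q-factorials and Gaussian polynomials as polynomials in q
  (the indeterminate), over an arbitrary field; all divisions are exact
  polynomial divisions.\<close>

definition qint :: "nat \<Rightarrow> 'a::field poly" where
  "qint j = (1 - monom 1 j) div (1 - [:0, 1:])"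

definition qfact :: "nat \<Rightarrow> 'a::field poly" where
  "qfact n = (\<Prod>j = 1..n. qint j)"

definition qbinom :: "nat \<Rightarrow> nat \<Rightarrow> 'a::field poly" where
  "qbinom n k = (if k \<le> n then qfact n div (qfact k * qfact (n - k)) else 0)"

end

theory Submission
  imports Defs
begin

lemma qint_sum: "(qint j :: 'a::field poly) = (\<Sum>i<j. monom 1 i)"
proof -
  have "(1 - monom 1 j :: 'a poly) = (\<Sum>i<j. monom 1 i) * (1 - [:0, 1:])"
  proof (induction j)
    case 0 then show ?case by simp
  next
    case (Suc j)
    have "monom (1::'a) j * [:0,1:] = monom 1 (Suc j)"
      by (simp add: monom_Suc)
    then show ?case using Suc by (simp add: algebra_simps)
  qed
  moreover have "(1 - [:0, 1:] :: 'a poly) \<noteq> 0"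
    by (metis coeff_1 coeff_diff coeff_pCons_0 diff_zero one_neq_zero zero_neq_one coeff_0 pCons_0_0 one_pCons)
  ultimately show ?thesis unfolding qint_def by simp
qed

lemma qint_split: "k \<le> m \<Longrightarrow> (qint m :: 'a::field poly) = qint k + monom 1 k * qint (m - k)"
proof -
  assume "k \<le> m"
  then obtain d where m: "m = k + d" by (metis le_add_diff_inverse)
  have "(\<Sum>i<k + d. monom (1::'a) i) = (\<Sum>i<k. monom 1 i) + (\<Sum>i<d. monom 1 (k + i))"
    by (induction d) (simp_all add: add_ac)
  then show ?thesis unfolding qint_sum m by (simp add: sum_distrib_left mult_monom)
qed

lemma qint_nz: "j \<ge> 1 \<Longrightarrow> (qint j :: 'a::field poly) \<noteq> 0"
proof -
  assume "j \<ge> 1"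
  have "coeff (qint j :: 'a poly) 0 = (\<Sum>i<j. coeff (monom 1 i) 0)"
    unfolding qint_sum by (simp add: coeff_sum)
  also have "\<dots> = 1" using \<open>j \<ge> 1\<close>
    by (simp add: coeff_monom)
  finally show ?thesis by auto
qed

lemma qfact_nz: "(qfact n :: 'a::field poly) \<noteq> 0"
  unfolding qfact_def by (auto simp: qint_nz)

lemma qfact_Suc: "(qfact (Suc n) :: 'a::field poly) = qfact n * qint (Suc n)"
  unfolding qfact_def by (simp add: prod.nat_ivl_Suc')

fun G :: "nat \<Rightarrow> nat \<Rightarrow> 'a::field poly" where
  "G n 0 = 1"
| "G 0 (Suc k) = 0"
| "G (Suc n) (Suc k) = G n k + monom 1 (Suc k) * G n (Suc k)"

lemma G_zero: "n < k \<Longrightarrow> G n k = 0"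
  by (induction n k rule: G.induct) auto

lemma G_fact: "k \<le> n \<Longrightarrow> G n k * qfact k * qfact (n - k) = (qfact n :: 'a::field poly)"
proof (induction n k rule: G.induct)
  case (1 n) then show ?case by (simp add: qfact_def)
next
  case (2 k) then show ?case by simp
next
  case (3 n k)
  have A: "G n k * qfact (Suc k) * qfact (n - k) = (qfact n :: 'a poly) * qint (Suc k)"
    using 3 by (simp add: qfact_Suc mult_ac)
  have B: "monom 1 (Suc k) * G n (Suc k) * qfact (Suc k) * qfact (n - k)
      = (qfact n :: 'a poly) * (monom 1 (Suc k) * qint (n - k))"
  proof (cases "k = n")
    case True then show ?thesis by (simp add: G_zero qint_sum)
  next
    case False
    then have "Suc k \<le> n" using 3 by simp
    then have e: "n - k = Suc (n - Suc k)" by simp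
    show ?thesis using 3(2)[OF \<open>Suc k \<le> n\<close>] unfolding e qfact_Suc
      by (simp add: mult_ac e[symmetric])
  qed
  have "qint (Suc n) = (qint (Suc k) :: 'a poly) + monom 1 (Suc k) * qint (n - k)"
    using qint_split[of "Suc k" "Suc n"] 3 by simp
  then have "(qfact (Suc n) :: 'a poly) = qfact n * qint (Suc k) + qfact n * (monom 1 (Suc k) * qint (n - k))"
    by (simp add: qfact_Suc algebra_simps)
  also have "\<dots> = G n k * qfact (Suc k) * qfact (n - k) + monom 1 (Suc k) * G n (Suc k) * qfact (Suc k) * qfact (n - k)"
    using A B by simp
  also have "\<dots> = G (Suc n) (Suc k) * qfact (Suc k) * qfact (Suc n - Suc k)"
    by (simp add: algebra_simps)
  finally show ?case by simp
qed

lemma qbinom_G: "qbinom n k = (G n k :: 'a::field poly)"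
proof (cases "k \<le> n")
  case True
  have "qfact n div (qfact k * qfact (n - k)) = (G n k :: 'a poly)"
    using G_fact[OF True, where 'a='a, symmetric] qfact_nz[of k] qfact_nz[of "n-k"]
    by (auto simp add: mult.assoc)
  then show ?thesis using True unfolding qbinom_def by simp
next
  case False then show ?thesis unfolding qbinom_def by (simp add: G_zero)
qed

lemma gen: "(qbinom (i + m) (k + m) :: 'a::field poly) =
           qbinom i k + (\<Sum>r = 1..m. monom 1 (k + r) * qbinom (i + r - 1) (k + r))"
proof (induction m)
  case 0 then show ?case by simp
next
  case (Suc m)
  have "(qbinom (i + Suc m) (k + Suc m) :: 'a poly) = qbinom (i + m) (k + m)
      + monom 1 (k + Suc m) * qbinom (i + Suc m - 1) (k + Suc m)"
    by (simp add: qbinom_G)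
  then show ?case using Suc by simp
qed

theorem lemma6:
  fixes i k :: nat
  shows "(qbinom (i + k) (2 * k) :: 'a::field poly) =
           qbinom i k + (\<Sum>r = 1..k. monom 1 (k + r) * qbinom (i + r - 1) (k + r))"
  using gen[of i k k] by (simp add: mult_2)

end
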